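(* Let $q,d\geq 2$ be integers. For every $A\in\mathbb{N}$ and every $\mathbf{s}=(\theta_u,\theta_w,\theta_2,\theta_1,\theta_0)\in\mathbb{Z}^5$ (a row vector), $$\gamma(qA,q,d;\mathbf{s})=\sum_{\lambda=0}^{q-1}\gamma(A,q,d;\mathbf{s}M_\lambda),$$ where, for each $\lambda\in\{0,\ldots,q-1\}$, $$M_\lambda=\begin{pmatrix} q & \lambda-q+1 & q & \lambda-q+1 & 0\\ 0 & 1 & 0 & 1 & 0\\ 0 & 0 & q^2 & \lambda q-\frac{q(q-1)}{2} & \frac{\lambda(\lambda+1)}{2}\\ 0 & 0 & 0 & q & \lambda\\ 0 & 0 & 0 & 0 & 1 \end{pmatrix}.$$
   Context: For an integer $q\geq 2$ and $n\in\mathbb{N}=\{0,1,2,\ldots\}$: $v_q(0)=0$ and, for $n>0$, $v_q(n)=\max\{k\in\mathbb{N}: q^k\mid n\}$; $w_q(n)=\sum_{i=0}^n v_q(i)$; $u_q(n)=\sum_{i=0}^n w_q(i)$. For $\mathbf{s}=(\theta_u,\theta_w,\theta_2,\theta_1,\theta_0)\in\mathbb{Z}^5$ and $A\in\mathbb{N}$, $\gamma(A,q,d;\mathbf{s})$ denotes the number of $n\in\mathbb{N}$ with $n<A$ such that $\theta_u u_q(n)+\theta_w w_q(n)+\theta_2\frac{n(n+1)}{2}+\theta_1 n+\theta_0\equiv 0 \pmod d$. *)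

theory Defs
  imports Main
begin

definition vq :: "nat \<Rightarrow> nat \<Rightarrow> nat" where
  "vq q n = (if n = 0 then 0 else Max {k. q ^ k dvd n})"

definition wq :: "nat \<Rightarrow> nat \<Rightarrow> nat" where
  "wq q n = (\<Sum>i\<le>n. vq q i)"

definition uq :: "nat \<Rightarrow> nat \<Rightarrow> nat" where
  "uq q n = (\<Sum>i\<le>n. wq q i)"

text \<open>Parameter vectors s = (theta_u, theta_w, theta_2, theta_1, theta_0) are
  int lists of length 5 (index 0 = theta_u, ..., index 4 = theta_0).\<close>

definition gamma :: "nat \<Rightarrow> nat \<Rightarrow> int \<Rightarrow> int list \<Rightarrow> nat" where
  "gamma A q d s = card {n. n < A \<and>
     (s!0 * int (uq q n) + s!1 * int (wq q n) + s!2 * int (n * (n + 1) div 2)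
      + s!3 * int n + s!4) mod d = 0}"

definition row_mat_mult :: "int list \<Rightarrow> int list list \<Rightarrow> int list" where
  "row_mat_mult s M = map (\<lambda>j. \<Sum>i<5. s!i * M!i!j) [0..<5]"

definition Mlam :: "int \<Rightarrow> int \<Rightarrow> int list list" where
  "Mlam q l =
    [[q, l - q + 1, q, l - q + 1, 0],
     [0, 1, 0, 1, 0],
     [0, 0, q^2, l * q - q * (q - 1) div 2, l * (l + 1) div 2],
     [0, 0, 0, q, l],
     [0, 0, 0, 0, 1]]"

end

theory Submission
  imports Defs
begin

lemma vq_fin:
  fixes q n :: nat
  assumes "q \<ge> 2" "n > 0"
  shows "finite {k. q ^ k dvd n}"
proof -
  have "{k. q ^ k dvd n} \<subseteq> {..<n}"
  proof
    fix k assume "k \<in> {k. q ^ k dvd n}"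
    then have "q ^ k \<le> n" using assms by (simp add: dvd_imp_le)
    moreover have "k < 2 ^ k" by (rule less_exp)
    moreover have "(2::nat) ^ k \<le> q ^ k" using assms by (simp add: power_mono)
    ultimately have "k < n" by linarith
    then show "k \<in> {..<n}" by simp
  qed
  then show ?thesis using finite_subset by blast
qed

lemma vq_not_dvd:
  assumes "\<not> q dvd n"
  shows "vq q n = 0"
proof (cases "n = 0")
  case True then show ?thesis by (simp add: vq_def)
next
  case False
  have "{k. q ^ k dvd n} = {0}"
  proof (safe)
    fix k assume "q ^ k dvd n"
    show "k = 0"
    proof (rule ccontr)
      assume "k \<noteq> 0"
      then have "q dvd q ^ k" by (simp add: dvd_power)
      with \<open>q ^ k dvd n\<close> assms show False using dvd_trans by blast
    qed
  qed simp
  then show ?thesis using False by (simp add: vq_def)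
qed

lemma vq_mult:
  fixes q n :: nat
  assumes "q \<ge> 2" "n > 0"
  shows "vq q (q * n) = Suc (vq q n)"
proof -
  have fin: "finite {k. q ^ k dvd n}" using vq_fin assms by blast
  have ne: "{k. q ^ k dvd n} \<noteq> {}" by (metis empty_iff mem_Collect_eq one_dvd power_0)
  have eq: "{k. q ^ k dvd q * n} = insert 0 (Suc ` {k. q ^ k dvd n})"
  proof (safe)
    fix k assume h: "q ^ k dvd q * n" "k \<notin> Suc ` {k. q ^ k dvd n}"
    show "k = 0"
    proof (cases k)
      case (Suc j)
      then have "q ^ j dvd n" using h(1) assms by (simp add: mult_dvd_mono)
      then show ?thesis using h(2) Suc by blast
    qed
  next
    fix k assume "q ^ k dvd n"
    then show "q ^ Suc k dvd q * n" by (simp add: mult_dvd_mono)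
  qed auto
  have "Max (insert 0 (Suc ` {k. q ^ k dvd n})) = Suc (Max {k. q ^ k dvd n})"
  proof -
    have "Max (insert 0 (Suc ` {k. q ^ k dvd n})) = max 0 (Max (Suc ` {k. q ^ k dvd n}))"
      using fin ne by (simp add: Max_insert)
    also have "Max (Suc ` {k. q ^ k dvd n}) = Suc (Max {k. q ^ k dvd n})"
      using fin ne by (simp add: mono_Max_commute[symmetric] mono_Suc)
    finally show ?thesis by simp
  qed
  then show ?thesis using assms eq by (simp add: vq_def)
qed

lemma wq_Suc: "wq q (Suc n) = wq q n + vq q (Suc n)"
  by (simp add: wq_def)

lemma uq_Suc: "uq q (Suc n) = uq q n + wq q (Suc n)"
  by (simp add: uq_def)

lemma wq_off:
  assumes "q \<ge> 2" "l < q"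
  shows "wq q (q * m + l) = wq q (q * m)"
  using assms(2)
proof (induction l)
  case (Suc l)
  have "\<not> q dvd Suc (q * m + l)"
  proof
    assume "q dvd Suc (q * m + l)"
    then have "q dvd Suc l" by (metis add_Suc_right dvd_add_right_iff dvd_triv_left)
    then show False using Suc.prems dvd_imp_le by fastforce
  qed
  then show ?case using Suc by (simp add: wq_Suc vq_not_dvd)
qed simp

lemma wq_mult:
  assumes "q \<ge> 2"
  shows "wq q (q * m) = m + wq q m"
proof (induction m)
  case 0 then show ?case by (simp add: wq_def vq_def)
next
  case (Suc m)
  have e: "q * Suc m = Suc (q * m + (q - 1))" using assms by simp
  have "wq q (q * Suc m) = wq q (q * m + (q - 1)) + vq q (q * Suc m)"
    by (subst e, simp add: wq_Suc del: mult_Suc_right) (simp add: e del: mult_Suc_right)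
  also have "\<dots> = wq q (q * m) + Suc (vq q (Suc m))"
    using wq_off[of q "q - 1" m] vq_mult[of q "Suc m"] assms by simp
  finally show ?case using Suc by (simp add: wq_Suc)
qed

lemma wq_main:
  assumes "q \<ge> 2" "l < q"
  shows "wq q (q * m + l) = m + wq q m"
  using wq_off wq_mult assms by simp

lemma T2_Suc: "Suc m * (Suc m + 1) div 2 = m * (m + 1) div 2 + Suc m"
  by (induction m) auto

lemma uq_main:
  assumes "q \<ge> 2"
  shows "\<forall>l<q. int (uq q (q*m+l)) + int q * int (wq q m) + int q * int m
     = int q * int (uq q m) + int q * int (m*(m+1) div 2) + (int l + 1) * (int m + int (wq q m))"
proof (induction m)
  case 0
  have "\<forall>l<q. uq q l = 0"
  proof (intro allI impI)
    fix l assume "l < q"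
    then show "uq q l = 0"
    proof (induction l)
      case 0 then show ?case by (simp add: uq_def wq_def vq_def)
    next
      case (Suc l)
      then show ?case using wq_main[of q "Suc l" 0] assms by (simp add: uq_Suc wq_def vq_def)
    qed
  qed
  moreover have "wq q 0 = 0" "uq q 0 = 0" by (simp_all add: wq_def uq_def vq_def)
  ultimately show ?case by simp
next
  case (Suc m)
  have base: "int (uq q (q*Suc m)) + int q * int (wq q (Suc m)) + int q * int (Suc m)
     = int q * int (uq q (Suc m)) + int q * int (Suc m*(Suc m+1) div 2) + (int (Suc m) + int (wq q (Suc m)))"
  proof -
    have e: "q * Suc m = Suc (q * m + (q - 1))" using assms by simp
    have h1: "uq q (q * Suc m) = uq q (q * m + (q - 1)) + wq q (q * Suc m)"
      by (subst e, simp add: uq_Suc del: mult_Suc_right) (simp add: e del: mult_Suc_right)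
    have h2: "wq q (q * Suc m) = Suc m + wq q (Suc m)" using wq_mult assms by blast
    have "q - 1 < q" using assms by simp
    note h3 = Suc.IH[rule_format, OF this]
    have h4: "int (q - 1) + 1 = int q" using assms by simp
    have h5: "uq q (Suc m) = uq q m + wq q (Suc m)" by (rule uq_Suc)
    have h6: "Suc m * (Suc m + 1) div 2 = m * (m + 1) div 2 + Suc m" by (rule T2_Suc)
    show ?thesis using h1 h2 h3[unfolded h4] h5 h6 by (simp add: algebra_simps)
  qed
  show ?case
  proof (intro allI impI)
    fix l assume "l < q"
    then show "int (uq q (q*Suc m+l)) + int q * int (wq q (Suc m)) + int q * int (Suc m)
     = int q * int (uq q (Suc m)) + int q * int (Suc m*(Suc m+1) div 2) + (int l + 1) * (int (Suc m) + int (wq q (Suc m)))"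
    proof (induction l)
      case 0 then show ?case using base by simp
    next
      case (Suc l)
      have "uq q (q * Suc m + Suc l) = uq q (q * Suc m + l) + wq q (q * Suc m + Suc l)"
        using uq_Suc by (metis add_Suc_right)
      moreover have "wq q (q * Suc m + Suc l) = Suc m + wq q (Suc m)"
        using wq_main assms Suc.prems by blast
      ultimately show ?case using Suc by (simp add: algebra_simps)
    qed
  qed
qed


definition Ex :: "nat \<Rightarrow> int list \<Rightarrow> nat \<Rightarrow> int" where
  "Ex q s n = s!0 * int (uq q n) + s!1 * int (wq q n) + s!2 * int (n * (n + 1) div 2)
      + s!3 * int n + s!4"

lemma int_half: "2 * int (n * (n + 1) div 2) = int n * (int n + 1)"
proof -
  have "2 * (n * (n + 1) div 2) = n * (n + 1)" by (rule even_two_times_div_two) simp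
  then have "int (2 * (n * (n + 1) div 2)) = int n * (int n + 1)" by (simp add: algebra_simps)
  then show ?thesis by (metis of_nat_mult of_nat_numeral)
qed

lemma int_half2: "2 * (x * (x + 1) div 2) = (x::int) * (x + 1)"
  by (rule even_two_times_div_two) simp

lemma int_half3: "2 * (x * (x - 1) div 2) = (x::int) * (x - 1)"
  by (rule even_two_times_div_two) simp

lemma T_alg: "2*(X::int) = (Q*M+L)*(Q*M+L+1) \<Longrightarrow> 2*t = M*(M+1) \<Longrightarrow> 2*C = L*(L+1) \<Longrightarrow> 2*D = Q*(Q-1)
  \<Longrightarrow> X = Q^2*t + (L*Q - D)*M + C"
  by algebra

lemma T_main:
  fixes q m l :: nat
  shows "int ((q*m+l) * (q*m+l+1) div 2) = int q ^ 2 * int (m*(m+1) div 2)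
     + (int l * int q - int q * (int q - 1) div 2) * int m + int l * (int l + 1) div 2"
proof -
  have a: "2 * int ((q*m+l) * (q*m+l+1) div 2) = int (q*m+l) * (int (q*m+l) + 1)" by (rule int_half)
  have b: "2 * int (m*(m+1) div 2) = int m * (int m + 1)" by (rule int_half)
  have c: "2 * (int l * (int l + 1) div 2) = int l * (int l + 1)" by (rule int_half2)
  have d: "2 * (int q * (int q - 1) div 2) = int q * (int q - 1)" by (rule int_half3)
  have a': "2 * int ((q*m+l) * (q*m+l+1) div 2) = (int q * int m + int l) * (int q * int m + int l + 1)"
    using a by simp
  show ?thesis using T_alg[OF a' b c d] .
qed

lemma sum5: "(\<Sum>i<(5::nat). f i) = f 0 + f 1 + f 2 + f 3 + (f 4::int)"
  by (simp add: eval_nat_numeral)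
lemma rm: "j < 5 \<Longrightarrow> row_mat_mult s M ! j = s!0 * M!0!j + s!1 * M!1!j + s!2 * M!2!j + s!3 * M!3!j + s!4 * M!4!j"
  unfolding row_mat_mult_def by (simp add: sum5)
lemma R: "row_mat_mult s (Mlam q l) ! 0 = s!0 * q"
     "row_mat_mult s (Mlam q l) ! 1 = s!0 * (l - q + 1) + s!1"
     "row_mat_mult s (Mlam q l) ! 2 = s!0 * q + s!2 * q^2"
     "row_mat_mult s (Mlam q l) ! 3 = s!0 * (l - q + 1) + s!1 + s!2 * (l * q - q * (q - 1) div 2) + s!3 * q"
     "row_mat_mult s (Mlam q l) ! 4 = s!2 * (l * (l + 1) div 2) + s!3 * l + s!4"
  by (simp_all add: rm Mlam_def)
lemma key:
  assumes "q \<ge> 2" "l < q" "length s = 5"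
  shows "Ex q s (q*m+l) = Ex q (row_mat_mult s (Mlam (int q) (int l))) m"
proof -
  have U: "int (uq q (q*m+l)) = int q * int (uq q m) + int q * int (m*(m+1) div 2) + (int l + 1) * (int m + int (wq q m))
      - int q * int (wq q m) - int q * int m"
    using uq_main[OF assms(1)] assms(2) by (simp add: algebra_simps)
  have W: "int (wq q (q*m+l)) = int m + int (wq q m)" using wq_main assms by simp
  have N: "int (q*m+l) = int q * int m + int l" by simp
  show ?thesis
    unfolding Ex_def R U W N T_main[of q m l] by algebra
qed

theorem proposition2p3:
  fixes q :: nat and d :: int and A :: nat and s :: "int list"
  assumes "q \<ge> 2" and "d \<ge> 2" and "length s = 5"
  shows "gamma (q * A) q d s =
    (\<Sum>l<q. gamma A q d (row_mat_mult s (Mlam (int q) (int l))))"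
proof -
  define s' where "s' l = row_mat_mult s (Mlam (int q) (int l))" for l :: nat
  have g: "gamma B q d t = card {n. n < B \<and> Ex q t n mod d = 0}" for B t
    by (simp add: gamma_def Ex_def)
  have bij: "bij_betw (\<lambda>n. (n mod q, n div q)) {n. n < q*A \<and> Ex q s n mod d = 0}
      (SIGMA l:{..<q}. {m. m < A \<and> Ex q (s' l) m mod d = 0})"
  proof (rule bij_betw_byWitness[where f' = "\<lambda>(l,m). q*m+l"])
    show "\<forall>a\<in>{n. n < q*A \<and> Ex q s n mod d = 0}. (case (a mod q, a div q) of (l, m) \<Rightarrow> q * m + l) = a"
      by simp
    show "\<forall>a'\<in>(SIGMA l:{..<q}. {m. m < A \<and> Ex q (s' l) m mod d = 0}). (\<lambda>n. (n mod q, n div q)) (case a' of (l, m) \<Rightarrow> q * m + l) = a'"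
      by auto
    show "(\<lambda>n. (n mod q, n div q)) ` {n. n < q*A \<and> Ex q s n mod d = 0} \<subseteq> (SIGMA l:{..<q}. {m. m < A \<and> Ex q (s' l) m mod d = 0})"
    proof (rule image_subsetI)
      fix n assume "n \<in> {n. n < q*A \<and> Ex q s n mod d = 0}"
      then have n: "n < q*A" "Ex q s n mod d = 0" by simp_all
      have 1: "n mod q < q" using assms by simp
      have 2: "n div q < A" by (metis less_mult_imp_div_less mult.commute n(1))
      have "Ex q s n = Ex q s (q * (n div q) + n mod q)" by (simp only: mult_div_mod_eq)
      also have "\<dots> = Ex q (s' (n mod q)) (n div q)" unfolding s'_def
        by (rule key[OF assms(1) 1 assms(3)])
      finally have 3: "Ex q (s' (n mod q)) (n div q) mod d = 0" using n by simp
      show "(n mod q, n div q) \<in> (SIGMA l:{..<q}. {m. m < A \<and> Ex q (s' l) m mod d = 0})"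
        using 1 2 3 by simp
    qed
    show "(\<lambda>(l,m). q*m+l) ` (SIGMA l:{..<q}. {m. m < A \<and> Ex q (s' l) m mod d = 0}) \<subseteq> {n. n < q*A \<and> Ex q s n mod d = 0}"
    proof (rule image_subsetI)
      fix x assume "x \<in> (SIGMA l:{..<q}. {m. m < A \<and> Ex q (s' l) m mod d = 0})"
      then obtain l m where x: "x = (l, m)" and h: "l < q" "m < A" "Ex q (s' l) m mod d = 0"
        by auto
      have "q*m+l < q*(m+1)" using h by simp
      also have "\<dots> \<le> q*A" using h(2) by (intro mult_le_mono2) simp
      finally have 1: "q*m+l < q*A" .
      have 2: "Ex q s (q*m+l) mod d = 0" using key[OF assms(1) h(1) assms(3), of m] h(3) unfolding s'_def by simp
      show "(case x of (l, m) \<Rightarrow> q * m + l) \<in> {n. n < q*A \<and> Ex q s n mod d = 0}"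
        using 1 2 x by simp
    qed
  qed
  have "gamma (q * A) q d s = card (SIGMA l:{..<q}. {m. m < A \<and> Ex q (s' l) m mod d = 0})"
    unfolding g using bij_betw_same_card[OF bij] .
  also have "\<dots> = (\<Sum>l<q. card {m. m < A \<and> Ex q (s' l) m mod d = 0})"
    by (rule card_SigmaI) auto
  finally show ?thesis unfolding g s'_def .
qed

end
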